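(* Let $f:\mathbb{N}\to\mathbb{R}$ satisfy $f\in\Omega(\ell)$, i.e., there are $\gamma>0$ and $\ell_0$ with $f(\ell)\ge\gamma\ell$ for all $\ell\ge\ell_0$. Then there is a constant $\delta>0$ (depending only on $f$) such that for every instance $(A,C,k)$ and every committee $W$ that is affordable and $f$-representative, every AV-completion of $W$ has utilitarian ratio at least $\delta/\sqrt{k}$.
   Context: An instance $(A,C,k)$ consists of a finite nonempty candidate set $C$, voters $N=\{1,\dots,n\}$, approval sets $A_i\subseteq C$, and a committee size $1\le k\le |C|$. $N_c=\{i: c\in A_i\}$. A committee is $W\subseteq C$ with $|W|\le k$. $\mathrm{sw}(W)=\sum_i|A_i\cap W|$; the utilitarian ratio of $W$ is $\mathrm{sw}(W)/\max\{\mathrm{sw}(W'):|W'|=k\}$. An AV-completion of $W$ is $W\cup T$ where $T\subseteq C\setminus W$, $|T|=k-|W|$, and $T$ maximizes $\sum_{c\in T}|N_c|$ among such sets. $W$ is affordable if there are $p_i:C\to\mathbb{R}_{\ge0}$ with $p_i(c)=0$ for $c\notin A_i$, $\sum_c p_i(c)\le k/n$, $\sum_i p_i(c)=1$ for $c\in W$, $\sum_i p_i(c)=0$ for $c\notin W$. $W$ is $f$-representative if for every $c\notin W$, every $\ell\in\{1,\dots,k\}$ and every $N'\subseteq N_c$ with $|N'|\ge \ell n/k$, $\frac{1}{|N'|}\sum_{i\in N'}|A_i\cap W|\ge f(\ell)$. *)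

theory Defs
  imports Complex_Main
begin

text \<open>Candidates and voters are natural numbers; voters are N = {1..n}.
  A voter profile is A :: nat => nat set (A i is the approval set of voter i).\<close>

definition voters :: "nat \<Rightarrow> nat set" where
  "voters n = {1..n}"

definition valid_instance :: "nat set \<Rightarrow> (nat \<Rightarrow> nat set) \<Rightarrow> nat \<Rightarrow> nat \<Rightarrow> bool" where
  "valid_instance C A n k \<longleftrightarrow> finite C \<and> C \<noteq> {} \<and> 1 \<le> n
     \<and> (\<forall>i\<in>voters n. A i \<subseteq> C) \<and> 1 \<le> k \<and> k \<le> card C"

definition supporters :: "(nat \<Rightarrow> nat set) \<Rightarrow> nat \<Rightarrow> nat \<Rightarrow> nat set" where
  "supporters A n c = {i \<in> voters n. c \<in> A i}"

definition committee :: "nat set \<Rightarrow> nat \<Rightarrow> nat set \<Rightarrow> bool" where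
  "committee C k W \<longleftrightarrow> W \<subseteq> C \<and> card W \<le> k"

definition sw :: "(nat \<Rightarrow> nat set) \<Rightarrow> nat \<Rightarrow> nat set \<Rightarrow> nat" where
  "sw A n W = (\<Sum>i\<in>voters n. card (A i \<inter> W))"

definition opt_sw :: "nat set \<Rightarrow> (nat \<Rightarrow> nat set) \<Rightarrow> nat \<Rightarrow> nat \<Rightarrow> nat" where
  "opt_sw C A n k = Max {sw A n W' | W'. W' \<subseteq> C \<and> card W' = k}"

definition util_ratio :: "nat set \<Rightarrow> (nat \<Rightarrow> nat set) \<Rightarrow> nat \<Rightarrow> nat \<Rightarrow> nat set \<Rightarrow> real" where
  "util_ratio C A n k W =
     (if opt_sw C A n k = 0 then 1 else real (sw A n W) / real (opt_sw C A n k))"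

definition AV_completion ::
  "nat set \<Rightarrow> (nat \<Rightarrow> nat set) \<Rightarrow> nat \<Rightarrow> nat \<Rightarrow> nat set \<Rightarrow> nat set \<Rightarrow> bool" where
  "AV_completion C A n k W W' \<longleftrightarrow>
     (\<exists>T. T \<subseteq> C - W \<and> card T = k - card W \<and>
        (\<forall>T'. T' \<subseteq> C - W \<and> card T' = k - card W \<longrightarrow>
           (\<Sum>c\<in>T'. card (supporters A n c)) \<le> (\<Sum>c\<in>T. card (supporters A n c)))
        \<and> W' = W \<union> T)"

definition affordable :: "nat set \<Rightarrow> (nat \<Rightarrow> nat set) \<Rightarrow> nat \<Rightarrow> nat \<Rightarrow> nat set \<Rightarrow> bool" where
  "affordable C A n k W \<longleftrightarrow>
     (\<exists>p :: nat \<Rightarrow> nat \<Rightarrow> real.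
        (\<forall>i\<in>voters n. \<forall>c\<in>C. p i c \<ge> 0)
      \<and> (\<forall>i\<in>voters n. \<forall>c\<in>C. c \<notin> A i \<longrightarrow> p i c = 0)
      \<and> (\<forall>i\<in>voters n. (\<Sum>c\<in>C. p i c) \<le> real k / real n)
      \<and> (\<forall>c\<in>W. (\<Sum>i\<in>voters n. p i c) = 1)
      \<and> (\<forall>c\<in>C - W. (\<Sum>i\<in>voters n. p i c) = 0))"

definition f_representative ::
  "(nat \<Rightarrow> real) \<Rightarrow> nat set \<Rightarrow> (nat \<Rightarrow> nat set) \<Rightarrow> nat \<Rightarrow> nat \<Rightarrow> nat set \<Rightarrow> bool" where
  "f_representative f C A n k W \<longleftrightarrow>
     (\<forall>c\<in>C - W. \<forall>l\<in>{1..k}. \<forall>N'. N' \<subseteq> supporters A n c \<and>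
        real (card N') \<ge> real l * real n / real k \<longrightarrow>
        (\<Sum>i\<in>N'. real (card (A i \<inter> W))) / real (card N') \<ge> f l)"

end

theory Submission
  imports Defs
begin

lemma fin_voters[simp]: "finite (voters n)" by (simp add: voters_def)
lemma card_voters[simp]: "card (voters n) = n" by (simp add: voters_def)
lemma supp_sub: "supporters A n c \<subseteq> voters n" by (auto simp: supporters_def)
lemma fin_supp[simp]: "finite (supporters A n c)"
  by (rule finite_subset[OF supp_sub]) simp
lemma card_supp_le: "card (supporters A n c) \<le> n"
  using card_mono[OF fin_voters supp_sub] by simp

lemma sw_count:
  assumes "finite S"
  shows "sw A n S = (\<Sum>c\<in>S. card (supporters A n c))"
proof -
  have "sw A n S = (\<Sum>i\<in>voters n. \<Sum>c\<in>S. if c \<in> A i then 1 else (0::nat))"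
    unfolding sw_def
  proof (rule sum.cong[OF refl])
    fix i
    show "card (A i \<inter> S) = (\<Sum>c\<in>S. if c \<in> A i then 1 else 0)"
      using assms by (simp add: sum.If_cases Int_commute)
  qed
  also have "\<dots> = (\<Sum>c\<in>S. \<Sum>i\<in>voters n. if c \<in> A i then 1 else (0::nat))"
    by (rule sum.swap)
  also have "\<dots> = (\<Sum>c\<in>S. card (supporters A n c))"
  proof (rule sum.cong[OF refl])
    fix c
    have "supporters A n c = {i\<in>voters n. c \<in> A i}" by (simp add: supporters_def)
    then show "(\<Sum>i\<in>voters n. if c \<in> A i then 1 else (0::nat)) = card (supporters A n c)"
      by (simp add: sum.If_cases Int_def)
  qed
  finally show ?thesis .
qed

lemma sw_mono:
  assumes "finite S" "W \<subseteq> S" shows "sw A n W \<le> sw A n S"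
  unfolding sw_def
  using assms by (intro sum_mono card_mono) auto

lemma afford_lb:
  assumes v: "valid_instance C A n k" and cm: "committee C k W"
    and af: "affordable C A n k W" and c: "c \<in> W"
  shows "real n / real k \<le> real (card (supporters A n c))"
proof -
  obtain p :: "nat \<Rightarrow> nat \<Rightarrow> real" where
    p0: "\<forall>i\<in>voters n. \<forall>c\<in>C. p i c \<ge> 0" and
    pA: "\<forall>i\<in>voters n. \<forall>c\<in>C. c \<notin> A i \<longrightarrow> p i c = 0" and
    pb: "\<forall>i\<in>voters n. (\<Sum>c\<in>C. p i c) \<le> real k / real n" and
    pW: "\<forall>c\<in>W. (\<Sum>i\<in>voters n. p i c) = 1"
    using af unfolding affordable_def by blast
  have cC: "c \<in> C" using cm c by (auto simp: committee_def)
  have fC: "finite C" and n1: "1 \<le> n" and k1: "1 \<le> k" using v by (auto simp: valid_instance_def)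
  let ?S = "supporters A n c"
  have "1 = (\<Sum>i\<in>voters n. p i c)" using pW c by simp
  also have "\<dots> = (\<Sum>i\<in>?S. p i c)"
  proof -
    have "(\<Sum>i\<in>voters n. p i c) = (\<Sum>i\<in>?S. p i c) + (\<Sum>i\<in>voters n - ?S. p i c)"
      using sum.subset_diff[OF supp_sub[of A n c] fin_voters[of n], of "\<lambda>i. p i c"] by linarith
    moreover have "(\<Sum>i\<in>voters n - ?S. p i c) = 0"
      using pA cC by (intro sum.neutral) (auto simp: supporters_def)
    ultimately show ?thesis by simp
  qed
  also have "\<dots> \<le> (\<Sum>i\<in>?S. real k / real n)"
  proof (rule sum_mono)
    fix i assume i: "i \<in> ?S"
    hence iv: "i \<in> voters n" using supp_sub by blast
    have "p i c \<le> (\<Sum>c\<in>C. p i c)"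
      using p0 iv cC fC by (intro member_le_sum) auto
    then show "p i c \<le> real k / real n" using pb iv by force
  qed
  also have "\<dots> = real (card ?S) * real k / real n" by simp
  finally have "real n \<le> real (card ?S) * real k" using n1 by (simp add: field_simps)
  then show ?thesis using k1 by (simp add: field_simps)
qed

lemma sw_lb:
  assumes v: "valid_instance C A n k" and cm: "committee C k W"
    and af: "affordable C A n k W"
  shows "real (card W) * (real n / real k) \<le> real (sw A n W)"
proof -
  have fW: "finite W" using v cm by (meson committee_def finite_subset valid_instance_def)
  have "real (card W) * (real n / real k) = (\<Sum>c\<in>W. real n / real k)" by simp
  also have "\<dots> \<le> (\<Sum>c\<in>W. real (card (supporters A n c)))"
    by (rule sum_mono) (rule afford_lb[OF v cm af])
  also have "\<dots> = real (sw A n W)" using sw_count[OF fW] by simp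
  finally show ?thesis .
qed


lemma sw_real: "real (sw A n W) = (\<Sum>i\<in>voters n. real (card (A i \<inter> W)))"
  by (simp add: sw_def)

lemma key:
  assumes v: "valid_instance C A n k" and cm: "committee C k W"
    and af: "affordable C A n k W" and rep: "f_representative f C A n k W"
    and g: "\<gamma> > 0" and fl: "\<forall>l\<ge>l0. f l \<ge> \<gamma> * real l" and c: "c \<in> C - W"
  shows "real (card W) * real (card (supporters A n c))
          \<le> (real (max l0 1) + 2/\<gamma> + 1) * sqrt (real k) * real (sw A n W)"
proof -
  define s where "s = real (card (supporters A n c))"
  define x where "x = s * real k / real n"
  define L where "L = max l0 1"
  define K where "K = real L + 2/\<gamma> + 1"
  define sw' where "sw' = real (sw A n W)"
  define w where "w = real (card W)"
  have n1: "1 \<le> n" and k1: "1 \<le> k" using v by (auto simp: valid_instance_def)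
  have wk: "w \<le> real k" using cm by (simp add: committee_def w_def)
  have w0: "w \<ge> 0" by (simp add: w_def)
  have sk: "sqrt (real k) \<ge> 1" using k1 by simp
  have sw0: "sw' \<ge> 0" by (simp add: sw'_def)
  have s0: "s \<ge> 0" by (simp add: s_def)
  have sn: "s \<le> real n" using card_supp_le[of A n c] by (simp add: s_def)
  have x0: "x \<ge> 0" using s0 by (simp add: x_def)
  have xk: "x \<le> real k" using sn n1 k1 by (simp add: x_def field_simps)
  have wn: "w * (real n / real k) \<le> sw'" using sw_lb[OF v cm af] by (simp add: w_def sw'_def)
  have eq: "w * s = (w * (real n / real k)) * x" using n1 k1 by (simp add: x_def field_simps)
  have base: "w * s \<le> sw' * x" unfolding eq by (rule mult_right_mono[OF wn x0])
  have Kge: "K \<ge> real L" "K \<ge> 2/\<gamma>" "K \<ge> 1" using g by (auto simp: K_def)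
  have "w * s \<le> K * sqrt (real k) * sw'"
  proof (cases "x < real L")
    case True
    have "w * s \<le> sw' * real L"
      using order_trans[OF base mult_left_mono[OF less_imp_le[OF True] sw0]] .
    also have "\<dots> \<le> sw' * (K * sqrt (real k))"
    proof (rule mult_left_mono[OF _ sw0])
      have "real L \<le> K * 1" using Kge by simp
      also have "\<dots> \<le> K * sqrt (real k)" using Kge sk by (intro mult_left_mono) auto
      finally show "real L \<le> K * sqrt (real k)" .
    qed
    finally show ?thesis by (simp add: mult_ac)
  next
    case False
    define l where "l = nat \<lfloor>x\<rfloor>"
    have xL: "real L \<le> x" using False by simp
    have L1: "L \<ge> 1" "L \<ge> l0" by (auto simp: L_def)
    have fx: "of_int \<lfloor>x\<rfloor> = real l" using x0 by (simp add: l_def)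
    have lx: "real l \<le> x" using fx of_int_floor_le[of x] by simp
    have xl: "x < real l + 1" using fx real_of_int_floor_add_one_gt[of x] by simp
    have lL: "l \<ge> L"
    proof -
      have "int L \<le> \<lfloor>x\<rfloor>" using xL by (simp add: le_floor_iff)
      then show ?thesis by (simp add: l_def)
    qed
    have l1: "l \<ge> 1" "l \<ge> l0" using lL L1 by auto
    have lk: "l \<le> k" using lx xk by simp
    have x2: "x \<le> 2 * real l" using xl l1 by simp
    have card: "real l * real n / real k \<le> s"
      using lx n1 k1 by (simp add: x_def field_simps)
    have spos: "s > 0" using x0 xL L1 s0 by (cases "s = 0") (auto simp: x_def)
    have "c \<in> C - W" by fact
    then have r: "(\<Sum>i\<in>supporters A n c. real (card (A i \<inter> W))) / real (card (supporters A n c)) \<ge> f l"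
      using rep l1 lk card unfolding f_representative_def s_def by auto
    have sumle: "(\<Sum>i\<in>supporters A n c. real (card (A i \<inter> W))) \<le> sw'"
      unfolding sw'_def sw_real by (rule sum_mono2[OF fin_voters supp_sub]) auto
    have "s * f l \<le> sw'" using r sumle spos unfolding s_def[symmetric]
      by (simp add: field_simps)
    moreover have "s * (\<gamma> * real l) \<le> s * f l" using fl l1 s0 by (intro mult_left_mono) auto
    moreover have "s * (\<gamma> * x / 2) \<le> s * (\<gamma> * real l)"
      using x2 g s0 by (intro mult_left_mono) auto
    ultimately have swx: "s * (\<gamma> * x / 2) \<le> sw'" by linarith
    show ?thesis
    proof (cases "x \<le> 2/\<gamma> * sqrt (real k)")
      case True
      have "w * s \<le> sw' * (2/\<gamma> * sqrt (real k))"
        using order_trans[OF base mult_left_mono[OF True sw0]] .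
      also have "\<dots> \<le> sw' * (K * sqrt (real k))"
      proof (rule mult_left_mono[OF _ sw0])
        show "2/\<gamma> * sqrt (real k) \<le> K * sqrt (real k)"
          using Kge(2) by (rule mult_right_mono) simp
      qed
      finally show ?thesis by (simp add: mult_ac)
    next
      case False
      then have "\<gamma> * x / 2 > sqrt (real k)" using g by (simp add: field_simps)
      then have "s * sqrt (real k) \<le> s * (\<gamma> * x / 2)" using s0 by (intro mult_left_mono) auto
      with swx have ss: "s * sqrt (real k) \<le> sw'" by linarith
      have "w * s \<le> real k * s" using wk s0 by (intro mult_right_mono) auto
      also have "\<dots> = sqrt (real k) * (s * sqrt (real k))"
      proof -
        have e: "sqrt (real k) * sqrt (real k) = real k" by simp
        have "sqrt (real k) * (s * sqrt (real k)) = (sqrt (real k) * sqrt (real k)) * s"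
          by (simp only: mult_ac)
        then show ?thesis by (simp only: e)
      qed
      also have "\<dots> \<le> sqrt (real k) * sw'" using ss by (intro mult_left_mono) auto
      also have "\<dots> \<le> K * sqrt (real k) * sw'"
      proof -
        have "1 * (sqrt (real k) * sw') \<le> K * (sqrt (real k) * sw')"
          using Kge sk sw0 by (intro mult_right_mono) auto
        then show ?thesis by (simp add: mult_ac)
      qed
      finally show ?thesis .
    qed
  qed
  then show ?thesis by (simp add: w_def s_def K_def L_def sw'_def)
qed


lemma opt_bound:
  assumes v: "valid_instance C A n k" and cm: "committee C k W"
    and av: "AV_completion C A n k W W'"
    and B: "\<forall>c\<in>C - W. real (card W) * real (card (supporters A n c)) \<le> B" and B0: "B \<ge> 0"
  shows "real (opt_sw C A n k) \<le> real (sw A n W') + B"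
proof -
  have fC: "finite C" and kC: "k \<le> card C" using v by (auto simp: valid_instance_def)
  have WC: "W \<subseteq> C" and Wk: "card W \<le> k" using cm by (auto simp: committee_def)
  have fW: "finite W" using WC fC finite_subset by auto
  obtain T where TC: "T \<subseteq> C - W" and cT: "card T = k - card W"
    and Tmax: "\<forall>T'. T' \<subseteq> C - W \<and> card T' = k - card W \<longrightarrow>
           (\<Sum>c\<in>T'. card (supporters A n c)) \<le> (\<Sum>c\<in>T. card (supporters A n c))"
    and W': "W' = W \<union> T"
    using av unfolding AV_completion_def by blast
  define s where "s c = card (supporters A n c)" for c
  have fT: "finite T" using TC fC finite_subset by auto
  let ?S = "{sw A n Q | Q. Q \<subseteq> C \<and> card Q = k}"
  have Seq: "?S = sw A n ` {Q. Q \<subseteq> C \<and> card Q = k}" by auto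
  have fin: "finite ?S" unfolding Seq
    by (rule finite_imageI, rule finite_subset[of _ "Pow C"]) (use fC in auto)
  obtain Q0 where "Q0 \<subseteq> C" "card Q0 = k" using obtain_subset_with_card_n[OF kC] by metis
  then have ne: "?S \<noteq> {}" by auto
  have "opt_sw C A n k \<in> ?S" unfolding opt_sw_def by (rule Max_in[OF fin ne])
  then obtain Q where QC: "Q \<subseteq> C" and cQ: "card Q = k" and oQ: "opt_sw C A n k = sw A n Q" by auto
  have fQ: "finite Q" using QC fC finite_subset by auto
  have swQ: "sw A n Q = sum s (Q \<inter> W) + sum s (Q - W)"
    using sw_count[OF fQ] fQ by (simp add: s_def sum.Int_Diff)
  have s1: "sum s (Q \<inter> W) \<le> sum s W" by (rule sum_mono2[OF fW]) auto
  have swW: "sw A n W = sum s W" using sw_count[OF fW] by (simp add: s_def)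
  have swW': "sw A n W' = sum s W + sum s T"
  proof -
    have "W \<inter> T = {}" using TC by auto
    then have "sum s W' = sum s W + sum s T" unfolding W' using fW fT by (simp add: sum.union_disjoint)
    moreover have "finite W'" using W' fW fT by simp
    ultimately show ?thesis using sw_count by (simp add: s_def)
  qed
  have Tm: "T' \<subseteq> C - W \<Longrightarrow> card T' = k - card W \<Longrightarrow> sum s T' \<le> sum s T" for T'
    using Tmax by (simp add: s_def)
  have fQW: "finite (Q - W)" using fQ by simp
  have cQW: "card (Q - W) \<le> k" using cQ fQ by (metis card_mono Diff_subset)
  have s2: "real (sum s (Q - W)) \<le> real (sum s T) + B"
  proof (cases "card (Q - W) \<le> k - card W")
    case True
    have fCW: "finite (C - W)" using fC by simp
    have QWC: "Q - W \<subseteq> C - W" using QC by auto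
    have ccw: "card (C - W) = card C - card W" using WC fW by (simp add: card_Diff_subset)
    have "k - card W - card (Q - W) \<le> card ((C - W) - (Q - W))"
      using card_Diff_subset[OF fQW QWC] ccw kC by simp
    then obtain U where U: "U \<subseteq> (C - W) - (Q - W)" "card U = k - card W - card (Q - W)"
      using obtain_subset_with_card_n by metis
    have fU: "finite U" using U(1) fCW finite_subset by blast
    define T' where "T' = (Q - W) \<union> U"
    have T'C: "T' \<subseteq> C - W" using U QWC by (auto simp: T'_def)
    have cT': "card T' = k - card W"
    proof -
      have "(Q - W) \<inter> U = {}" using U by auto
      then have "card T' = card (Q - W) + card U" unfolding T'_def using fQW fU card_Un_disjoint by blast
      then show ?thesis using U True by simp
    qed
    have "sum s (Q - W) \<le> sum s T'" unfolding T'_def by (rule sum_mono2) (use fQW fU in auto)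
    also have "\<dots> \<le> sum s T" by (rule Tm[OF T'C cT'])
    finally show ?thesis using B0 by linarith
  next
    case False
    then have "k - card W \<le> card (Q - W)" by simp
    then obtain T' where T': "T' \<subseteq> Q - W" "card T' = k - card W"
      using obtain_subset_with_card_n by metis
    define E where "E = (Q - W) - T'"
    have fE: "finite E" using fQW by (simp add: E_def)
    have split: "sum s (Q - W) = sum s E + sum s T'"
      unfolding E_def by (rule sum.subset_diff[OF T'(1) fQW])
    have t1: "sum s T' \<le> sum s T" using T' QC by (intro Tm) auto
    have cE: "card E \<le> card W"
    proof -
      have "card E = card (Q - W) - card T'" unfolding E_def
        using card_Diff_subset[OF finite_subset[OF T'(1) fQW] T'(1)] .
      then show ?thesis using T'(2) cQW Wk by simp
    qed
    have Ebound: "real (sum s E) \<le> B"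
    proof (cases "card W = 0")
      case True
      then have "E = {}" using cE fE by simp
      then show ?thesis using B0 by simp
    next
      case False
      have EC: "E \<subseteq> C - W" using QC by (auto simp: E_def)
      have "real (card W) * real (sum s E) = (\<Sum>c\<in>E. real (card W) * real (s c))"
        by (simp add: sum_distrib_left)
      also have "\<dots> \<le> (\<Sum>c\<in>E. B)" using B EC by (intro sum_mono) (auto simp: s_def)
      also have "\<dots> = real (card E) * B" by simp
      also have "\<dots> \<le> real (card W) * B" using cE B0 by (intro mult_right_mono) auto
      finally have "real (card W) * real (sum s E) \<le> real (card W) * B" .
      then show ?thesis using False by simp
    qed
    have r1: "real (sum s T') \<le> real (sum s T)" using t1 by (rule of_nat_mono)
    have r2: "real (sum s (Q - W)) = real (sum s E) + real (sum s T')" using split by (metis of_nat_add)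
    show ?thesis using r1 r2 Ebound by linarith
  qed
  have "real (opt_sw C A n k) = real (sum s (Q \<inter> W)) + real (sum s (Q - W))"
    using oQ swQ by simp
  also have "\<dots> \<le> real (sum s W) + (real (sum s T) + B)"
  proof -
    have "real (sum s (Q \<inter> W)) \<le> real (sum s W)" using s1 by (rule of_nat_mono)
    then show ?thesis using s2 by linarith
  qed
  also have "\<dots> = real (sw A n W') + B" using swW' by simp
  finally show ?thesis .
qed


theorem corollary1:
  fixes f :: "nat \<Rightarrow> real"
  assumes "\<exists>\<gamma>>0. \<exists>l0. \<forall>l\<ge>l0. f l \<ge> \<gamma> * real l"
  shows "\<exists>\<delta>>0. \<forall>C A n k W W'.
           valid_instance C A n k \<and> committee C k W \<and> affordable C A n k W
           \<and> f_representative f C A n k W \<and> AV_completion C A n k W W'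
           \<longrightarrow> util_ratio C A n k W' \<ge> \<delta> / sqrt (real k)"
proof -
  obtain \<gamma> l0 where g: "\<gamma> > 0" and fl: "\<forall>l\<ge>l0. f l \<ge> \<gamma> * real l" using assms by blast
  define K where "K = real (max l0 1) + 2/\<gamma> + 1"
  have K0: "K \<ge> 0" using g by (simp add: K_def)
  show ?thesis
  proof (rule exI[of _ "1 / (1 + K)"], intro conjI allI impI)
    show "1 / (1 + K) > 0" using K0 by simp
    fix C A n k W W'
    assume H: "valid_instance C A n k \<and> committee C k W \<and> affordable C A n k W
           \<and> f_representative f C A n k W \<and> AV_completion C A n k W W'"
    then have v: "valid_instance C A n k" and cm: "committee C k W" and af: "affordable C A n k W"
      and rep: "f_representative f C A n k W" and av: "AV_completion C A n k W W'" by auto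
    have k1: "1 \<le> k" and fC: "finite C" using v by (auto simp: valid_instance_def)
    have sk: "sqrt (real k) \<ge> 1" using k1 by simp
    obtain T where TC: "T \<subseteq> C - W" and W': "W' = W \<union> T"
      using av unfolding AV_completion_def by blast
    have fW': "finite W'" using W' TC cm fC by (meson committee_def finite_UnI finite_subset Diff_subset order_trans)
    have swle: "real (sw A n W) \<le> real (sw A n W')"
      using sw_mono[OF fW', of W A n] W' by simp
    define S where "S = real (sw A n W')"
    have S0: "S \<ge> 0" by (simp add: S_def)
    have B: "\<forall>c\<in>C - W. real (card W) * real (card (supporters A n c)) \<le> K * sqrt (real k) * S"
    proof
      fix c assume c: "c \<in> C - W"
      have "real (card W) * real (card (supporters A n c)) \<le> K * sqrt (real k) * real (sw A n W)"
        using key[OF v cm af rep g fl c] by (simp add: K_def)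
      also have "\<dots> \<le> K * sqrt (real k) * S" unfolding S_def
        using swle K0 by (intro mult_left_mono) auto
      finally show "real (card W) * real (card (supporters A n c)) \<le> K * sqrt (real k) * S" .
    qed
    have opt: "real (opt_sw C A n k) \<le> S + K * sqrt (real k) * S"
      using opt_bound[OF v cm av B] K0 S0 by (simp add: S_def)
    also have "\<dots> \<le> (1 + K) * sqrt (real k) * S"
    proof -
      have "S * 1 \<le> S * sqrt (real k)" using S0 sk by (intro mult_left_mono) auto
      then show ?thesis by (simp add: algebra_simps)
    qed
    finally have opt2: "real (opt_sw C A n k) \<le> (1 + K) * sqrt (real k) * S" .
    show "util_ratio C A n k W' \<ge> 1 / (1 + K) / sqrt (real k)"
    proof (cases "opt_sw C A n k = 0")
      case True
      have a: "1 / (1 + K) \<le> 1" using K0 by simp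
      have "1 / (1 + K) / sqrt (real k) \<le> 1 / (1 + K) / 1"
        by (rule divide_left_mono) (use K0 sk in auto)
      with a have "1 / (1 + K) / sqrt (real k) \<le> 1" by simp
      then show ?thesis using True by (simp add: util_ratio_def)
    next
      case False
      then have op: "real (opt_sw C A n k) > 0" by simp
      have sp: "sqrt (real k) > 0" using sk by simp
      define D where "D = (1 + K) * sqrt (real k)"
      have D0: "D > 0" using sp K0 by (simp add: D_def)
      have o1: "real (opt_sw C A n k) \<le> D * S" using opt2 by (simp add: D_def)
      have o2: "real (opt_sw C A n k) / D \<le> S" using o1 D0 by (simp add: divide_le_eq mult.commute)
      have o3: "1 / D \<le> S / real (opt_sw C A n k)"
        using o2 op by (simp add: le_divide_eq)
      have "1 / (1 + K) / sqrt (real k) \<le> S / real (opt_sw C A n k)"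
        using o3 by (simp add: D_def)
      then show ?thesis using False by (simp add: util_ratio_def S_def)
    qed
  qed
qed

end
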